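(* Let $G$, $K$, $\hat G$, $T$, $S$, $H$ be as described in the context, and let $c:D\to\{0,1\}$ be a stable partial coloring of $\hat G$, witnessed by $H_c$ and $X_c$. Let $D'\supseteq D$ with $D'\setminus D\subseteq H$, and let $c':D'\to\{0,1\}$ be an extension of $c$. Then there is a map $\tilde c:D'\to\{0,1\}$ such that: (i) $\tilde c$, as a coloring of $\hat G[D']$, is strongly maximal in $\lfloor X_c\rfloor$; (ii) $\{x\in D':\tilde c(x)\neq c'(x)\}\subseteq\lfloor X_c\rfloor$; (iii) for every $v\in X_c$, the set $\{x\in\lfloor v\rfloor:\tilde c(x)\neq c'(x)\}$ is a finite set of vertices of finite degree; and (iv) for every $v\in X_c$ such that no vertex of $D'\setminus D$ has a neighbor in $\lfloor v\rfloor$, we have $\tilde c|_{\lfloor v\rfloor}=c|_{\lfloor v\rfloor}$.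
   Context: Setting: $G$ is a countable connected graph with no alternating ray (a ray is alternating if it passes through infinitely many vertices of finite degree and infinitely many of infinite degree); $K$ is a finite graph disjoint from $G$; $\hat G$ is obtained from the disjoint union of $G$ and $K$ by adding arbitrary edges between $V(G)$ and $V(K)$. $T$ is a normal spanning tree of $G$ with root $r$ and tree order $\le$ ($u\le v$ iff $u$ lies on the root–$v$ path of $T$; normal means endpoints of every edge of $G$ are comparable). $\lfloor v\rfloor=\{u:u\ge v\}$, $\lfloor X\rfloor=\bigcup_{v\in X}\lfloor v\rfloor$; an antichain is a set of pairwise $\le$-incomparable vertices. $S$ is the set of $\le$-minimal vertices of finite degree of $G$, and $H=V(G)\setminus\lfloor S\rfloor$. For a coloring $c$ of a graph $\Gamma$: $\mathit{trans}(c)=\{uv\in E(\Gamma):c(u)\neq c(v)\}$; $c*F$ differs from $c$ exactly on $F$; for finite $F$ of vertices of finite degree, $\mathit{dtrans}(c,F)=|\mathit{trans}(c)\setminus\mathit{trans}(c*F)|-|\mathit{trans}(c*F)\setminus\mathit{trans}(c)|$; $c$ is strongly maximal in $A$ if $\mathit{dtrans}(c,F)\ge0$ for all finite $F\subseteq A$ of vertices of finite degree. A partial coloring $c:D\to\{0,1\}$ with $V(K)\subseteq D\subseteq V(\hat G)$ is stable if there are $H_c\subseteq H$ and an antichain $X_c\subseteq H\cup S$ such that: (S1) $D\setminus V(K)$ is the disjoint union of $H_c$ and $\lfloor X_c\rfloor$; (S2) $c$, as a coloring of $\hat G[D]$, is strongly maximal in $\lfloor X_c\rfloor$; (S3) for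 every $w\in V(\hat G)\setminus D$ and every $v\in X_c$, the set $N(w)\cap\lfloor v\rfloor$ is finite. *)

theory Defs
  imports Main "HOL-Library.Countable_Set"
begin

text \<open>The graph G-hat lives on VG \<union> VK with edge relation Eh; G and K are its induced
  subgraphs on VG and VK (so the extra edges between V(G) and V(K) are arbitrary).\<close>

definition induced :: "('a \<Rightarrow> 'a \<Rightarrow> bool) \<Rightarrow> 'a set \<Rightarrow> 'a \<Rightarrow> 'a \<Rightarrow> bool" where
  "induced E V u v \<longleftrightarrow> E u v \<and> u \<in> V \<and> v \<in> V"

definition simple_graph :: "'a set \<Rightarrow> ('a \<Rightarrow> 'a \<Rightarrow> bool) \<Rightarrow> bool" where
  "simple_graph V E \<longleftrightarrow> (\<forall>u v. E u v \<longrightarrow> u \<in> V \<and> v \<in> V \<and> u \<noteq> v \<and> E v u)"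

definition is_path :: "('a \<Rightarrow> 'a \<Rightarrow> bool) \<Rightarrow> 'a list \<Rightarrow> bool" where
  "is_path E p \<longleftrightarrow> p \<noteq> [] \<and> distinct p \<and> (\<forall>i. Suc i < length p \<longrightarrow> E (p ! i) (p ! Suc i))"

definition connected_graph :: "'a set \<Rightarrow> ('a \<Rightarrow> 'a \<Rightarrow> bool) \<Rightarrow> bool" where
  "connected_graph V E \<longleftrightarrow> V \<noteq> {} \<and>
     (\<forall>u\<in>V. \<forall>v\<in>V. \<exists>p. is_path E p \<and> set p \<subseteq> V \<and> hd p = u \<and> last p = v)"

definition acyclic_graph :: "('a \<Rightarrow> 'a \<Rightarrow> bool) \<Rightarrow> bool" where
  "acyclic_graph E \<longleftrightarrow> \<not> (\<exists>p. is_path E p \<and> 3 \<le> length p \<and> E (last p) (hd p))"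

definition spanning_tree :: "'a set \<Rightarrow> ('a \<Rightarrow> 'a \<Rightarrow> bool) \<Rightarrow> ('a \<Rightarrow> 'a \<Rightarrow> bool) \<Rightarrow> bool" where
  "spanning_tree V E T \<longleftrightarrow> simple_graph V T \<and> (\<forall>u v. T u v \<longrightarrow> E u v)
     \<and> connected_graph V T \<and> acyclic_graph T"

definition tree_le :: "('a \<Rightarrow> 'a \<Rightarrow> bool) \<Rightarrow> 'a \<Rightarrow> 'a \<Rightarrow> 'a \<Rightarrow> bool" where
  "tree_le T r u v \<longleftrightarrow> (\<exists>p. is_path T p \<and> hd p = r \<and> last p = v \<and> u \<in> set p)"

definition normal_spanning_tree ::
  "'a set \<Rightarrow> ('a \<Rightarrow> 'a \<Rightarrow> bool) \<Rightarrow> ('a \<Rightarrow> 'a \<Rightarrow> bool) \<Rightarrow> 'a \<Rightarrow> bool" where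
  "normal_spanning_tree V E T r \<longleftrightarrow> r \<in> V \<and> spanning_tree V E T \<and>
     (\<forall>u v. E u v \<longrightarrow> tree_le T r u v \<or> tree_le T r v u)"

definition fin_deg :: "('a \<Rightarrow> 'a \<Rightarrow> bool) \<Rightarrow> 'a \<Rightarrow> bool" where
  "fin_deg E v \<longleftrightarrow> finite {u. E v u}"

definition is_ray :: "'a set \<Rightarrow> ('a \<Rightarrow> 'a \<Rightarrow> bool) \<Rightarrow> (nat \<Rightarrow> 'a) \<Rightarrow> bool" where
  "is_ray V E f \<longleftrightarrow> inj f \<and> range f \<subseteq> V \<and> (\<forall>n. E (f n) (f (Suc n)))"

definition alternating_ray :: "'a set \<Rightarrow> ('a \<Rightarrow> 'a \<Rightarrow> bool) \<Rightarrow> (nat \<Rightarrow> 'a) \<Rightarrow> bool" where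
  "alternating_ray V E f \<longleftrightarrow> is_ray V E f \<and>
     infinite {v \<in> range f. fin_deg E v} \<and> infinite {v \<in> range f. \<not> fin_deg E v}"

text \<open>up-closure \<lfloor>v\<rfloor> = {u. u \<ge> v} and \<lfloor>X\<rfloor>.\<close>
definition up :: "'a set \<Rightarrow> ('a \<Rightarrow> 'a \<Rightarrow> bool) \<Rightarrow> 'a \<Rightarrow> 'a \<Rightarrow> 'a set" where
  "up V T r v = {u \<in> V. tree_le T r v u}"

definition upset :: "'a set \<Rightarrow> ('a \<Rightarrow> 'a \<Rightarrow> bool) \<Rightarrow> 'a \<Rightarrow> 'a set \<Rightarrow> 'a set" where
  "upset V T r X = (\<Union>v\<in>X. up V T r v)"

definition antichain :: "('a \<Rightarrow> 'a \<Rightarrow> bool) \<Rightarrow> 'a \<Rightarrow> 'a set \<Rightarrow> bool" where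
  "antichain T r X \<longleftrightarrow> (\<forall>x\<in>X. \<forall>y\<in>X. tree_le T r x y \<longrightarrow> x = y)"

definition Smin :: "'a set \<Rightarrow> ('a \<Rightarrow> 'a \<Rightarrow> bool) \<Rightarrow> ('a \<Rightarrow> 'a \<Rightarrow> bool) \<Rightarrow> 'a \<Rightarrow> 'a set" where
  "Smin V E T r = {v \<in> V. fin_deg E v \<and>
      (\<forall>u\<in>V. tree_le T r u v \<and> u \<noteq> v \<longrightarrow> \<not> fin_deg E u)}"

definition Hset :: "'a set \<Rightarrow> ('a \<Rightarrow> 'a \<Rightarrow> bool) \<Rightarrow> ('a \<Rightarrow> 'a \<Rightarrow> bool) \<Rightarrow> 'a \<Rightarrow> 'a set" where
  "Hset V E T r = V - upset V T r (Smin V E T r)"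

text \<open>Colourings: c :: 'a \<Rightarrow> bool, considered on the domain D (colours 0/1 = False/True).
  Edges of the induced graph Eh[D] are unordered pairs {u,v}.\<close>
definition trans_edges :: "('a \<Rightarrow> 'a \<Rightarrow> bool) \<Rightarrow> 'a set \<Rightarrow> ('a \<Rightarrow> bool) \<Rightarrow> 'a set set" where
  "trans_edges E D c = {{u, v} | u v. u \<in> D \<and> v \<in> D \<and> E u v \<and> c u \<noteq> c v}"

definition flip :: "('a \<Rightarrow> bool) \<Rightarrow> 'a set \<Rightarrow> 'a \<Rightarrow> bool" where
  "flip c F = (\<lambda>x. if x \<in> F then \<not> c x else c x)"

definition dtrans :: "('a \<Rightarrow> 'a \<Rightarrow> bool) \<Rightarrow> 'a set \<Rightarrow> ('a \<Rightarrow> bool) \<Rightarrow> 'a set \<Rightarrow> int" where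
  "dtrans E D c F =
     int (card (trans_edges E D c - trans_edges E D (flip c F)))
     - int (card (trans_edges E D (flip c F) - trans_edges E D c))"

definition strongly_maximal ::
  "('a \<Rightarrow> 'a \<Rightarrow> bool) \<Rightarrow> ('a \<Rightarrow> 'a \<Rightarrow> bool) \<Rightarrow> 'a set \<Rightarrow> ('a \<Rightarrow> bool) \<Rightarrow> 'a set \<Rightarrow> bool" where
  "strongly_maximal E Edeg D c A \<longleftrightarrow>
     (\<forall>F. finite F \<longrightarrow> F \<subseteq> A \<longrightarrow> (\<forall>v\<in>F. fin_deg Edeg v) \<longrightarrow> 0 \<le> dtrans E D c F)"

definition stable_wit ::
  "'a set \<Rightarrow> 'a set \<Rightarrow> ('a \<Rightarrow> 'a \<Rightarrow> bool) \<Rightarrow> ('a \<Rightarrow> 'a \<Rightarrow> bool) \<Rightarrow> 'a \<Rightarrow>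
   'a set \<Rightarrow> ('a \<Rightarrow> bool) \<Rightarrow> 'a set \<Rightarrow> 'a set \<Rightarrow> bool" where
  "stable_wit VG VK Eh T r D c Hc Xc \<longleftrightarrow>
     VK \<subseteq> D \<and> D \<subseteq> VG \<union> VK \<and>
     Hc \<subseteq> Hset VG (induced Eh VG) T r \<and>
     Xc \<subseteq> Hset VG (induced Eh VG) T r \<union> Smin VG (induced Eh VG) T r \<and>
     antichain T r Xc \<and>
     D - VK = Hc \<union> upset VG T r Xc \<and> Hc \<inter> upset VG T r Xc = {} \<and>
     strongly_maximal Eh (induced Eh VG) D c (upset VG T r Xc) \<and>
     (\<forall>w \<in> (VG \<union> VK) - D. \<forall>v\<in>Xc. finite ({u. Eh w u} \<inter> up VG T r v))"

end

theory Submission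
  imports Defs
begin


lemma is_path_succ: "is_path T p \<longleftrightarrow> p \<noteq> [] \<and> distinct p \<and> successively T p"
  unfolding is_path_def successively_conv_nth by blast

lemma no_two_paths:
  assumes symT: "\<And>x y. T x y \<Longrightarrow> T y x" and acy: "acyclic_graph T"
  shows "length p1 + length q1 = n \<Longrightarrow> is_path T p1 \<Longrightarrow> is_path T q1 \<Longrightarrow> last p1 = last q1
    \<Longrightarrow> a \<notin> set p1 \<Longrightarrow> a \<notin> set q1 \<Longrightarrow> T a (hd p1) \<Longrightarrow> T a (hd q1) \<Longrightarrow> hd p1 \<noteq> hd q1 \<Longrightarrow> False"
proof (induction n arbitrary: p1 q1 rule: less_induct)
  case (less n)
  obtain p0 z where p1: "p1 = p0 @ [z]" using less.prems(2) unfolding is_path_def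
    by (metis rev_exhaust)
  obtain q0 where q1: "q1 = q0 @ [z]" using less.prems(3,4) p1 unfolding is_path_def
    by (metis last_snoc rev_exhaust)
  have sp: "successively T (p0 @ [z])" "distinct (p0 @ [z])"
    using less.prems(2) p1 unfolding is_path_succ by auto
  have sq: "successively T (q0 @ [z])" "distinct (q0 @ [z])"
    using less.prems(3) q1 unfolding is_path_succ by auto
  have sq': "successively T (z # rev q0)"
  proof -
    have "successively (\<lambda>x y. T y x) (q0 @ [z])"
      using sq(1) by (rule successively_mono) (simp add: symT)
    then have "successively T (rev (q0 @ [z]))" by (simp only: successively_rev)
    then show ?thesis by simp
  qed
  show False
  proof (cases "set p0 \<inter> set q0 = {}")
    case True
    define cyc where "cyc = a # (p0 @ [z]) @ rev q0"
    have e1: "T a (hd (p0 @ [z]))" using less.prems(7) p1 by simp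
    have "successively T ((p0 @ [z]) @ rev q0)"
    proof -
      from sq' have h: "rev q0 = [] \<or> T z (hd (rev q0)) \<and> successively T (rev q0)"
        by (simp only: successively_Cons)
      show ?thesis using sp(1) h by (subst successively_append_iff) auto
    qed
    then have "successively T cyc" unfolding cyc_def using e1
      by (cases p0) (simp_all add: successively_Cons)
    moreover have "distinct cyc" unfolding cyc_def using True sp(2) sq(2) less.prems(5,6) p1 q1 by auto
    ultimately have "is_path T cyc" unfolding is_path_succ cyc_def by simp
    moreover have "3 \<le> length cyc"
      using less.prems(9) unfolding cyc_def p1 q1 by (cases p0; cases q0; simp)
    moreover have "T (last cyc) (hd cyc)"
      using less.prems(8) symT unfolding cyc_def q1 by (cases q0; simp add: last_rev)
    ultimately show False using acy unfolding acyclic_graph_def by blast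
  next
    case False
    then obtain x where x: "x \<in> set p0" "x \<in> set q0" by blast
    obtain p2 p3 where p0: "p0 = p2 @ x # p3" using x split_list by metis
    obtain q2 q3 where q0: "q0 = q2 @ x # q3" using x split_list by metis
    have pp: "is_path T (p2 @ [x])" using less.prems(2) unfolding p1 p0 is_path_succ
      by (simp add: successively_append_iff successively_Cons)
    have qq: "is_path T (q2 @ [x])" using less.prems(3) unfolding q1 q0 is_path_succ
      by (simp add: successively_append_iff successively_Cons)
    have hp: "hd (p2 @ [x]) = hd p1" unfolding p1 p0 by (cases p2) auto
    have hq: "hd (q2 @ [x]) = hd q1" unfolding q1 q0 by (cases q2) auto
    show False
      apply (rule less.IH[of "length (p2 @ [x]) + length (q2 @ [x])" "p2 @ [x]" "q2 @ [x]"])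
      using less.prems pp qq hp hq unfolding p1 q1 p0 q0
      by auto
  qed
qed

lemma path_unique:
  assumes symT: "\<And>x y. T x y \<Longrightarrow> T y x" and acy: "acyclic_graph T"
  shows "is_path T p \<Longrightarrow> is_path T q \<Longrightarrow> hd p = hd q \<Longrightarrow> last p = last q \<Longrightarrow> p = q"
proof (induction p arbitrary: q)
  case Nil
  then show ?case by (simp add: is_path_def)
next
  case (Cons a p')
  obtain q' where q: "q = a # q'" using Cons.prems(2,3) unfolding is_path_def by (cases q) auto
  show ?case
  proof (cases "p' = []")
    case True
    then have "last q = a" using Cons.prems(4) by simp
    then have "q' = []" using Cons.prems(2) q unfolding is_path_def
      by (metis distinct.simps(2) last_ConsR last_in_set)
    then show ?thesis using True q by simp
  next
    case False
    have q'ne: "q' \<noteq> []"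
    proof
      assume "q' = []"
      then have "last p' = a" using Cons.prems(4) q False by simp
      then show False using Cons.prems(1) False unfolding is_path_def
        by (metis distinct.simps(2) last_in_set)
    qed
    have pp: "is_path T p'" using Cons.prems(1) False unfolding is_path_succ
      by (simp add: successively_Cons)
    have qq: "is_path T q'" using Cons.prems(2) q'ne q unfolding is_path_succ
      by (simp add: successively_Cons)
    have ll: "last p' = last q'" using Cons.prems(4) q q'ne False by simp
    show ?thesis
    proof (cases "hd p' = hd q'")
      case True
      then show ?thesis using Cons.IH[OF pp qq True ll] q by simp
    next
      case ne: False
      have "T a (hd p')" using Cons.prems(1) False unfolding is_path_succ
        by (simp add: successively_Cons)
      moreover have "T a (hd q')" using Cons.prems(2) q'ne q unfolding is_path_succ
        by (simp add: successively_Cons)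
      moreover have "a \<notin> set p'" "a \<notin> set q'" using Cons.prems(1,2) q unfolding is_path_def by auto
      ultimately show ?thesis
        using no_two_paths[OF symT acy refl pp qq ll _ _ _ _ ne] by blast
    qed
  qed
qed

lemma path_prefix:
  assumes "is_path T (ys @ x # zs)"
  shows "is_path T (ys @ [x])" "hd (ys @ [x]) = hd (ys @ x # zs)"
  using assms unfolding is_path_succ
  by (auto simp: successively_append_iff successively_Cons hd_append)

context
  fixes T :: "'a \<Rightarrow> 'a \<Rightarrow> bool" and r :: 'a
  assumes symT: "\<And>x y. T x y \<Longrightarrow> T y x" and acy: "acyclic_graph T"
begin

lemma tle_trans: "tree_le T r v u \<Longrightarrow> tree_le T r u w \<Longrightarrow> tree_le T r v w"
proof -
  assume "tree_le T r v u" "tree_le T r u w"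
  then obtain p q where p: "is_path T p" "hd p = r" "last p = u" "v \<in> set p"
    and q: "is_path T q" "hd q = r" "last q = w" "u \<in> set q"
    unfolding tree_le_def by blast
  obtain q2 q3 where qs: "q = q2 @ u # q3" using q(4) split_list by metis
  have "is_path T (q2 @ [u])" "hd (q2 @ [u]) = r" using path_prefix[of T q2 u q3] q qs by auto
  then have "q2 @ [u] = p" using path_unique[OF symT acy] p by simp
  then have "v \<in> set q" using p(4) qs by auto
  then show ?thesis using q unfolding tree_le_def by blast
qed

lemma tle_lin: "tree_le T r w u \<Longrightarrow> tree_le T r v u \<Longrightarrow> tree_le T r w v \<or> tree_le T r v w"
proof -
  assume "tree_le T r w u" "tree_le T r v u"
  then obtain p q where p: "is_path T p" "hd p = r" "last p = u" "w \<in> set p"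
    and q: "is_path T q" "hd q = r" "last q = u" "v \<in> set q"
    unfolding tree_le_def by blast
  have "p = q" using path_unique[OF symT acy p(1) q(1)] p q by simp
  obtain p2 p3 where ps: "p = p2 @ w # p3" using p(4) split_list by metis
  show ?thesis
  proof (cases "v \<in> set (p2 @ [w])")
    case True
    have "is_path T (p2 @ [w])" "hd (p2 @ [w]) = r" using path_prefix[of T p2 w p3] p ps by auto
    moreover have "last (p2 @ [w]) = w" by simp
    ultimately show ?thesis using True unfolding tree_le_def by blast
  next
    case False
    then have "v \<in> set p3" using q(4) \<open>p = q\<close> ps by auto
    then obtain p4 p5 where p3: "p3 = p4 @ v # p5" using split_list by metis
    have "is_path T ((p2 @ w # p4) @ [v])" "hd ((p2 @ w # p4) @ [v]) = r"
      using path_prefix[of T "p2 @ w # p4" v p5] p ps p3 by auto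
    moreover have "last ((p2 @ w # p4) @ [v]) = v" "w \<in> set ((p2 @ w # p4) @ [v])" by simp_all
    ultimately show ?thesis unfolding tree_le_def by blast
  qed
qed

lemma tle_fin: "finite {w. tree_le T r w v}"
proof (cases "\<exists>p. is_path T p \<and> hd p = r \<and> last p = v")
  case True
  then obtain p where p: "is_path T p" "hd p = r" "last p = v" by blast
  have "{w. tree_le T r w v} \<subseteq> set p"
  proof
    fix w assume "w \<in> {w. tree_le T r w v}"
    then obtain q where q: "is_path T q" "hd q = r" "last q = v" "w \<in> set q"
      unfolding tree_le_def by blast
    have "q = p" using path_unique[OF symT acy q(1) p(1)] q p by simp
    then show "w \<in> set p" using q by simp
  qed
  then show ?thesis using finite_subset by blast
next
  case False
  then have "{w. tree_le T r w v} = {}" unfolding tree_le_def by blast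
  then show ?thesis by simp
qed

end



definition NE :: "('a \<Rightarrow> 'a \<Rightarrow> bool) \<Rightarrow> 'a set \<Rightarrow> 'a set set" where
  "NE E F = {{x, y} | x y. x \<in> F \<and> E x y}"

definition dd :: "'b set \<Rightarrow> 'b set \<Rightarrow> int" where
  "dd A B = int (card (A - B)) - int (card (B - A))"

lemma dtrans_dd: "dtrans E D c F = dd (trans_edges E D c) (trans_edges E D (flip c F))"
  unfolding dtrans_def dd_def by simp

lemma NE_finite:
  assumes "finite F" "\<And>x. x \<in> F \<Longrightarrow> finite {y. E x y}"
  shows "finite (NE E F)"
proof -
  have "NE E F = (\<lambda>(x, y). {x, y}) ` (SIGMA x:F. {y. E x y})"
    unfolding NE_def by auto
  then show ?thesis using assms by simp
qed

lemma trans_mem: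
  assumes symE: "\<And>x y. E x y \<Longrightarrow> E y x"
  shows "{u, v} \<in> trans_edges E D c \<longleftrightarrow> u \<in> D \<and> v \<in> D \<and> E u v \<and> c u \<noteq> c v"
  unfolding trans_edges_def using symE by (auto simp: doubleton_eq_iff)

lemma trans_diff_NE:
  assumes symE: "\<And>x y. E x y \<Longrightarrow> E y x"
  shows "trans_edges E D c - trans_edges E D (flip c F) \<subseteq> NE E F"
    "trans_edges E D (flip c F) - trans_edges E D c \<subseteq> NE E F"
proof -
  show "trans_edges E D c - trans_edges E D (flip c F) \<subseteq> NE E F"
  proof
    fix e assume e: "e \<in> trans_edges E D c - trans_edges E D (flip c F)"
    then obtain u v where uv: "e = {u, v}" "u \<in> D" "v \<in> D" "E u v" "c u \<noteq> c v"
      unfolding trans_edges_def by blast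
    have "u \<in> F \<or> v \<in> F"
    proof (rule ccontr)
      assume "\<not> (u \<in> F \<or> v \<in> F)"
      then have "e \<in> trans_edges E D (flip c F)" using uv unfolding trans_edges_def flip_def by auto
      then show False using e by blast
    qed
    then show "e \<in> NE E F" unfolding NE_def using uv symE by (auto simp: insert_commute)
  qed
  show "trans_edges E D (flip c F) - trans_edges E D c \<subseteq> NE E F"
  proof
    fix e assume e: "e \<in> trans_edges E D (flip c F) - trans_edges E D c"
    then obtain u v where uv: "e = {u, v}" "u \<in> D" "v \<in> D" "E u v" "flip c F u \<noteq> flip c F v"
      unfolding trans_edges_def by blast
    have "u \<in> F \<or> v \<in> F"
    proof (rule ccontr)
      assume "\<not> (u \<in> F \<or> v \<in> F)"
      then have "e \<in> trans_edges E D c" using uv unfolding trans_edges_def flip_def by auto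
      then show False using e by blast
    qed
    then show "e \<in> NE E F" unfolding NE_def using uv symE by (auto simp: insert_commute)
  qed
qed

lemma dd_card:
  assumes "finite M" "A - B \<subseteq> M" "B - A \<subseteq> M"
  shows "dd A B = int (card (A \<inter> M)) - int (card (B \<inter> M))"
proof -
  have a: "A \<inter> M = (A - B) \<union> (A \<inter> B \<inter> M)" using assms by blast
  have b: "B \<inter> M = (B - A) \<union> (A \<inter> B \<inter> M)" using assms by blast
  have f1: "finite (A - B)" "finite (B - A)" "finite (A \<inter> B \<inter> M)"
    using assms finite_subset by auto
  have "card (A \<inter> M) = card (A - B) + card (A \<inter> B \<inter> M)"
    unfolding a using f1 by (subst card_Un_disjoint) auto
  moreover have "card (B \<inter> M) = card (B - A) + card (A \<inter> B \<inter> M)"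
    unfolding b using f1 by (subst card_Un_disjoint) auto
  ultimately show ?thesis unfolding dd_def by simp
qed

lemma dd_cocycle:
  assumes "finite (A - B)" "finite (B - A)" "finite (B - C)" "finite (C - B)"
  shows "dd A B + dd B C = dd A C"
proof -
  define M where "M = (A - B) \<union> (B - A) \<union> (B - C) \<union> (C - B)"
  have fM: "finite M" unfolding M_def using assms by simp
  have "dd A B = int (card (A \<inter> M)) - int (card (B \<inter> M))"
    by (rule dd_card[OF fM]) (auto simp: M_def)
  moreover have "dd B C = int (card (B \<inter> M)) - int (card (C \<inter> M))"
    by (rule dd_card[OF fM]) (auto simp: M_def)
  moreover have "dd A C = int (card (A \<inter> M)) - int (card (C \<inter> M))"
    by (rule dd_card[OF fM]) (auto simp: M_def)
  ultimately show ?thesis by simp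
qed

lemma flip_flip: "flip (flip c A) B = flip c ((A - B) \<union> (B - A))"
  unfolding flip_def by auto

lemma flip_empty: "flip c {} = c"
  unfolding flip_def by simp

lemma dtrans_empty: "dtrans E D c {} = 0"
  unfolding dtrans_def flip_empty by simp

lemma dtrans_comp:
  assumes symE: "\<And>x y. E x y \<Longrightarrow> E y x" and f1: "finite (NE E F1)" and f2: "finite (NE E F2)"
  shows "dtrans E D c F1 + dtrans E D (flip c F1) F2 = dtrans E D c ((F1 - F2) \<union> (F2 - F1))"
proof -
  have "dd (trans_edges E D c) (trans_edges E D (flip c F1)) +
        dd (trans_edges E D (flip c F1)) (trans_edges E D (flip (flip c F1) F2)) =
        dd (trans_edges E D c) (trans_edges E D (flip (flip c F1) F2))"
    using trans_diff_NE[where E=E and D=D and c=c and F=F1, OF symE] trans_diff_NE[where E=E and D=D and c="flip c F1" and F=F2, OF symE] f1 f2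
    by (intro dd_cocycle) (rule finite_subset; assumption)+
  then show ?thesis unfolding dtrans_dd flip_flip .
qed

lemma dtrans_local:
  assumes symE: "\<And>x y. E x y \<Longrightarrow> E y x"
    and agree: "\<And>z. z \<in> F \<or> (\<exists>x\<in>F. E x z) \<Longrightarrow> c1 z = c2 z"
  shows "dtrans E D c1 F = dtrans E D c2 F"
proof -
  have key: "trans_edges E D c1 \<inter> NE E F = trans_edges E D c2 \<inter> NE E F"
    if ag: "\<And>z. z \<in> F \<or> (\<exists>x\<in>F. E x z) \<Longrightarrow> c1 z = c2 z" for c1 c2
  proof -
    have "e \<in> trans_edges E D c1 \<longleftrightarrow> e \<in> trans_edges E D c2" if e: "e \<in> NE E F" for e
    proof -
      obtain x y where xy: "e = {x, y}" "x \<in> F" "E x y" using e unfolding NE_def by blast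
      have "c1 x = c2 x" "c1 y = c2 y" using ag xy by blast+
      then show ?thesis unfolding xy using trans_mem[where E=E, OF symE] xy(3) by simp
    qed
    then show ?thesis by blast
  qed
  have k1: "trans_edges E D c1 \<inter> NE E F = trans_edges E D c2 \<inter> NE E F"
    by (rule key) (rule agree)
  have k2: "trans_edges E D (flip c1 F) \<inter> NE E F = trans_edges E D (flip c2 F) \<inter> NE E F"
    by (rule key) (use agree in \<open>auto simp: flip_def\<close>)
  have "trans_edges E D c1 - trans_edges E D (flip c1 F) =
        (trans_edges E D c1 \<inter> NE E F) - (trans_edges E D (flip c1 F) \<inter> NE E F)"
    using trans_diff_NE[where E=E and D=D and c=c1 and F=F, OF symE] by blast
  moreover have "trans_edges E D c2 - trans_edges E D (flip c2 F) =
        (trans_edges E D c2 \<inter> NE E F) - (trans_edges E D (flip c2 F) \<inter> NE E F)"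
    using trans_diff_NE[where E=E and D=D and c=c2 and F=F, OF symE] by blast
  moreover have "trans_edges E D (flip c1 F) - trans_edges E D c1 =
        (trans_edges E D (flip c1 F) \<inter> NE E F) - (trans_edges E D c1 \<inter> NE E F)"
    using trans_diff_NE[where E=E and D=D and c=c1 and F=F, OF symE] by blast
  moreover have "trans_edges E D (flip c2 F) - trans_edges E D c2 =
        (trans_edges E D (flip c2 F) \<inter> NE E F) - (trans_edges E D c2 \<inter> NE E F)"
    using trans_diff_NE[where E=E and D=D and c=c2 and F=F, OF symE] by blast
  ultimately show ?thesis unfolding dtrans_def k1 k2 by simp
qed

lemma dtrans_ext:
  assumes symE: "\<And>x y. E x y \<Longrightarrow> E y x" and fN: "finite (NE E F)"
    and FD: "F \<subseteq> D" and DD: "D \<subseteq> D'" and ext: "\<forall>x\<in>D. c' x = c x"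
    and fM: "finite M" and M: "{{w, u} | w u. w \<in> D' - D \<and> u \<in> F \<and> E w u} \<subseteq> M"
  shows "dtrans E D c F - int (card M) \<le> dtrans E D' c' F"
proof -
  let ?N = "NE E F"
  have e1: "dtrans E D c F = int (card (trans_edges E D c \<inter> ?N)) - int (card (trans_edges E D (flip c F) \<inter> ?N))"
    unfolding dtrans_dd by (rule dd_card[OF fN trans_diff_NE[where E=E, OF symE]])
  have e2: "dtrans E D' c' F = int (card (trans_edges E D' c' \<inter> ?N)) - int (card (trans_edges E D' (flip c' F) \<inter> ?N))"
    unfolding dtrans_dd by (rule dd_card[OF fN trans_diff_NE[where E=E, OF symE]])
  have s1: "trans_edges E D c \<inter> ?N \<subseteq> trans_edges E D' c' \<inter> ?N"
  proof
    fix e assume e: "e \<in> trans_edges E D c \<inter> ?N"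
    then obtain u v where "e = {u, v}" "u \<in> D" "v \<in> D" "E u v" "c u \<noteq> c v"
      unfolding trans_edges_def by blast
    moreover have "u \<in> D'" "v \<in> D'" "c' u \<noteq> c' v" using DD ext \<open>u \<in> D\<close> \<open>v \<in> D\<close> \<open>c u \<noteq> c v\<close> by auto
    ultimately have "e \<in> trans_edges E D' c'" unfolding trans_edges_def by blast
    then show "e \<in> trans_edges E D' c' \<inter> ?N" using e by blast
  qed
  have s2: "trans_edges E D' (flip c' F) \<inter> ?N \<subseteq> (trans_edges E D (flip c F) \<inter> ?N) \<union> M"
  proof
    fix e assume e: "e \<in> trans_edges E D' (flip c' F) \<inter> ?N"
    then obtain x y where xy: "e = {x, y}" "x \<in> F" "E x y" unfolding NE_def by blast
    have m: "x \<in> D'" "y \<in> D'" "flip c' F x \<noteq> flip c' F y"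
    proof -
      have "{x, y} \<in> trans_edges E D' (flip c' F)" using e xy by simp
      then show "x \<in> D'" "y \<in> D'" "flip c' F x \<noteq> flip c' F y"
        using trans_mem[where E=E and u=x and v=y and D=D' and c="flip c' F", OF symE] by simp_all
    qed
    show "e \<in> (trans_edges E D (flip c F) \<inter> ?N) \<union> M"
    proof (cases "y \<in> D")
      case True
      have "flip c F x \<noteq> flip c F y" using m True FD xy ext unfolding flip_def by auto
      then have "e \<in> trans_edges E D (flip c F)" unfolding xy
        using True FD xy trans_mem[where E=E and u=x and v=y and D=D and c="flip c F", OF symE] by auto
      then show ?thesis using e by blast
    next
      case False
      have "e = {y, x}" using xy by (simp add: insert_commute)
      moreover have "y \<in> D' - D" "E y x" using False m xy symE by auto
      ultimately have "e \<in> {{w, u} | w u. w \<in> D' - D \<and> u \<in> F \<and> E w u}" using xy by blast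
      then have "e \<in> M" using M by blast
      then show ?thesis by blast
    qed
  qed
  have fin1: "finite (trans_edges E D' c' \<inter> ?N)" "finite (trans_edges E D (flip c F) \<inter> ?N)"
    using fN by auto
  have "card (trans_edges E D c \<inter> ?N) \<le> card (trans_edges E D' c' \<inter> ?N)"
    using card_mono[OF fin1(1) s1] .
  moreover have "card (trans_edges E D' (flip c' F) \<inter> ?N) \<le> card (trans_edges E D (flip c F) \<inter> ?N) + card M"
    using card_mono[OF _ s2] card_Un_le[of "trans_edges E D (flip c F) \<inter> ?N" M] fin1 fM
    by (meson finite_UnI le_trans)
  ultimately show ?thesis unfolding e1 e2 by linarith
qed



theorem lemma3p5:
  fixes VG VK :: "'a set" and Eh T :: "'a \<Rightarrow> 'a \<Rightarrow> bool" and r :: 'a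
    and D D' Hc Xc :: "'a set" and c c' :: "'a \<Rightarrow> bool"
  assumes hatG: "simple_graph (VG \<union> VK) Eh"
    and disj: "VG \<inter> VK = {}"
    and finK: "finite VK"
    and countG: "countable VG"
    and connG: "connected_graph VG (induced Eh VG)"
    and noalt: "\<not> (\<exists>f. alternating_ray VG (induced Eh VG) f)"
    and nst: "normal_spanning_tree VG (induced Eh VG) T r"
    and stable: "stable_wit VG VK Eh T r D c Hc Xc"
    and DD': "D \<subseteq> D'"
    and D'H: "D' - D \<subseteq> Hset VG (induced Eh VG) T r"
    and ext: "\<forall>x\<in>D. c' x = c x"
  shows "\<exists>ct :: 'a \<Rightarrow> bool.
     strongly_maximal Eh (induced Eh VG) D' ct (upset VG T r Xc) \<and>
     {x \<in> D'. ct x \<noteq> c' x} \<subseteq> upset VG T r Xc \<and>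
     (\<forall>v\<in>Xc. finite {x \<in> up VG T r v. ct x \<noteq> c' x} \<and>
              (\<forall>x \<in> {x \<in> up VG T r v. ct x \<noteq> c' x}. fin_deg (induced Eh VG) x)) \<and>
     (\<forall>v\<in>Xc. \<not> (\<exists>w \<in> D' - D. \<exists>u \<in> up VG T r v. Eh w u) \<longrightarrow>
              (\<forall>x \<in> up VG T r v. ct x = c x))"
proof -
  let ?EG = "induced Eh VG"
  let ?U = "upset VG T r Xc"
  let ?UP = "up VG T r"
  let ?le = "tree_le T r"
  have symEh: "\<And>x y. Eh x y \<Longrightarrow> Eh y x" and inEh: "\<And>x y. Eh x y \<Longrightarrow> y \<in> VG \<union> VK"
    using hatG unfolding simple_graph_def by blast+
  have symT: "\<And>x y. T x y \<Longrightarrow> T y x" and acy: "acyclic_graph T"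
    using nst unfolding normal_spanning_tree_def spanning_tree_def simple_graph_def by blast+
  have normal: "\<And>u v. ?EG u v \<Longrightarrow> ?le u v \<or> ?le v u"
    using nst unfolding normal_spanning_tree_def by blast
  have trans': "\<And>v u w. ?le v u \<Longrightarrow> ?le u w \<Longrightarrow> ?le v w" using tle_trans[OF symT acy] by blast
  have lin: "\<And>w u v. ?le w u \<Longrightarrow> ?le v u \<Longrightarrow> ?le w v \<or> ?le v w" using tle_lin[OF symT acy] by blast
  have tfin: "\<And>v. finite {w. ?le w v}" using tle_fin[OF symT acy] by blast
  have st: "VK \<subseteq> D" "Xc \<subseteq> VG" "antichain T r Xc" "D - VK = Hc \<union> ?U"
    "strongly_maximal Eh ?EG D c ?U"
    "\<forall>w \<in> (VG \<union> VK) - D. \<forall>v\<in>Xc. finite ({u. Eh w u} \<inter> ?UP v)"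
    using stable unfolding stable_wit_def Hset_def Smin_def by blast+
  have HVG: "Hset VG ?EG T r \<subseteq> VG" unfolding Hset_def by blast
  have UPsub: "?UP v \<subseteq> VG" "?UP v \<subseteq> D" "?UP v \<subseteq> ?U" if "v \<in> Xc" for v
    using that st(4) unfolding up_def upset_def by blast+
  have UPdisj: "x \<notin> ?UP v'" if "v \<in> Xc" "v' \<in> Xc" "v \<noteq> v'" "x \<in> ?UP v" for v v' x
  proof
    assume "x \<in> ?UP v'"
    then have "?le v x" "?le v' x" using that unfolding up_def by auto
    then have "?le v v' \<or> ?le v' v" using lin by blast
    then show False using st(3) that unfolding antichain_def by blast
  qed
  have noedge: "\<not> Eh x y" if "v \<in> Xc" "v' \<in> Xc" "v \<noteq> v'" "x \<in> ?UP v" "y \<in> ?UP v'" for v v' x y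
  proof
    assume e: "Eh x y"
    have "x \<in> VG" "y \<in> VG" using that UPsub by blast+
    then have "?EG x y" using e unfolding induced_def by simp
    then have "?le x y \<or> ?le y x" by (rule normal)
    then show False
    proof
      assume "?le x y"
      then have "?le v y" using trans' that unfolding up_def by blast
      then have "y \<in> ?UP v" using \<open>y \<in> VG\<close> unfolding up_def by simp
      then show False using UPdisj that by blast
    next
      assume "?le y x"
      then have "?le v' x" using trans' that unfolding up_def by blast
      then have "x \<in> ?UP v'" using \<open>x \<in> VG\<close> unfolding up_def by simp
      then show False using UPdisj that by blast
    qed
  qed
  have inU: "\<exists>v\<in>Xc. x \<in> ?UP v" if "x \<in> ?U" for x using that unfolding upset_def by blast
  have finEh: "finite {y. Eh x y}" if "x \<in> VG" "fin_deg ?EG x" for x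
  proof -
    have "{y. Eh x y} \<subseteq> {y. ?EG x y} \<union> VK" using that inEh unfolding induced_def by auto
    moreover have "finite ({y. ?EG x y} \<union> VK)" using that finK unfolding fin_deg_def by simp
    ultimately show ?thesis using finite_subset by blast
  qed
  define Mv where "Mv v = {{w, u} | w u. w \<in> D' - D \<and> u \<in> ?UP v \<and> Eh w u}" for v
  have Mfin: "finite (Mv v)" if "v \<in> Xc" for v
  proof -
    define Wv where "Wv = {w \<in> D' - D. \<exists>u\<in>?UP v. Eh w u}"
    have "Wv \<subseteq> {w. ?le w v}"
    proof
      fix w assume "w \<in> Wv"
      then obtain u where wu: "w \<in> D' - D" "u \<in> ?UP v" "Eh w u" unfolding Wv_def by blast
      have wVG: "w \<in> VG" using wu D'H HVG by blast
      have "u \<in> VG" using wu UPsub that by blast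
      then have "?le w u \<or> ?le u w" using normal wVG wu unfolding induced_def by blast
      moreover have "\<not> ?le v w"
      proof
        assume "?le v w" then have "w \<in> ?UP v" using wVG unfolding up_def by simp
        then show False using wu UPsub that by blast
      qed
      ultimately have "?le w u" using trans' wu unfolding up_def by blast
      then show "w \<in> {w. ?le w v}" using lin wu \<open>\<not> ?le v w\<close> unfolding up_def by blast
    qed
    then have fW: "finite Wv" using tfin finite_subset by blast
    have "Mv v = (\<lambda>(w, u). {w, u}) ` (SIGMA w:Wv. {u. Eh w u} \<inter> ?UP v)"
      unfolding Mv_def Wv_def by auto
    moreover have "finite ({u. Eh w u} \<inter> ?UP v)" if "w \<in> Wv" for w
    proof -
      have "w \<in> (VG \<union> VK) - D" using that D'H HVG unfolding Wv_def by blast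
      then show ?thesis using st(6) \<open>v \<in> Xc\<close> by blast
    qed
    ultimately show ?thesis using fW by simp
  qed
  define Fam where "Fam v = {F. finite F \<and> F \<subseteq> ?UP v \<and> (\<forall>x\<in>F. fin_deg ?EG x)}" for v
  define g where "g F = - dtrans Eh D' c' F" for F
  have NEfin: "finite (NE Eh F)" if "F \<in> Fam v" "v \<in> Xc" for F v
    using that UPsub finEh unfolding Fam_def by (intro NE_finite) blast+
  have gbound: "g F \<le> int (card (Mv v))" if "F \<in> Fam v" "v \<in> Xc" for F v
  proof -
    have FU: "F \<subseteq> ?U" "F \<subseteq> D" using that UPsub unfolding Fam_def by blast+
    have "0 \<le> dtrans Eh D c F" using st(5) FU that unfolding strongly_maximal_def Fam_def by blast
    moreover have sub: "{{w, u} |w u. w \<in> D' - D \<and> u \<in> F \<and> Eh w u} \<subseteq> Mv v"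
    proof -
      have FUP: "F \<subseteq> ?UP v" using that(1) unfolding Fam_def by blast
      show ?thesis unfolding Mv_def
      proof
        fix e assume "e \<in> {{w, u} |w u. w \<in> D' - D \<and> u \<in> F \<and> Eh w u}"
        then obtain w u where "e = {w, u}" "w \<in> D' - D" "u \<in> F" "Eh w u" by blast
        then show "e \<in> {{w, u} |w u. w \<in> D' - D \<and> u \<in> ?UP v \<and> Eh w u}" using FUP by blast
      qed
    qed
    moreover have "dtrans Eh D c F - int (card (Mv v)) \<le> dtrans Eh D' c' F"
      by (rule dtrans_ext[OF symEh NEfin[OF that] FU(2) DD' ext Mfin[OF that(2)] sub])
    ultimately show ?thesis unfolding g_def by linarith
  qed
  have g0: "g {} = 0" unfolding g_def by (simp add: dtrans_empty)
  have emp: "{} \<in> Fam v" for v unfolding Fam_def by simp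
  have maxex: "\<exists>F\<in>Fam v. \<forall>G\<in>Fam v. g G \<le> g F" if "v \<in> Xc" for v
  proof -
    define Vs where "Vs = g ` Fam v \<inter> {0..int (card (Mv v))}"
    have "Vs \<subseteq> {0..int (card (Mv v))}" unfolding Vs_def by blast
    then have fV: "finite Vs" using finite_subset by blast
    have "0 \<in> Vs" unfolding Vs_def using emp g0 by force
    then have "Max Vs \<in> Vs" using fV Max_in by blast
    then obtain F where F: "F \<in> Fam v" "g F = Max Vs" unfolding Vs_def by auto
    have "g G \<le> g F" if G: "G \<in> Fam v" for G
    proof (cases "0 \<le> g G")
      case True
      then have "g G \<in> Vs" unfolding Vs_def using G gbound \<open>v \<in> Xc\<close> by auto
      then show ?thesis using F fV by simp
    next
      case False
      have "0 \<le> Max Vs" using \<open>0 \<in> Vs\<close> fV by simp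
      then show ?thesis using False F by simp
    qed
    then show ?thesis using F by blast
  qed
  define Fv where "Fv v = (if Mv v = {} then {} else SOME F. F \<in> Fam v \<and> (\<forall>G\<in>Fam v. g G \<le> g F))" for v
  have Fv: "Fv v \<in> Fam v" "\<forall>G\<in>Fam v. g G \<le> g (Fv v)" if "v \<in> Xc" for v
  proof -
    have "Fv v \<in> Fam v \<and> (\<forall>G\<in>Fam v. g G \<le> g (Fv v))"
    proof (cases "Mv v = {}")
      case True
      then have "\<forall>G\<in>Fam v. g G \<le> 0" using gbound that by fastforce
      then show ?thesis using True emp g0 unfolding Fv_def by simp
    next
      case False
      have "\<exists>F. F \<in> Fam v \<and> (\<forall>G\<in>Fam v. g G \<le> g F)" using maxex[OF that] by blast
      then show ?thesis unfolding Fv_def using False someI_ex by (simp add: someI_ex)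
    qed
    then show "Fv v \<in> Fam v" "\<forall>G\<in>Fam v. g G \<le> g (Fv v)" by blast+
  qed
  define Fall where "Fall = (\<Union>v\<in>Xc. Fv v)"
  define ct where "ct = flip c' Fall"
  have FvUP: "Fv v \<subseteq> ?UP v" if "v \<in> Xc" for v using Fv[OF that] unfolding Fam_def by blast
  have FallUP: "x \<in> Fall \<longleftrightarrow> x \<in> Fv v" if "v \<in> Xc" "x \<in> ?UP v" for v x
  proof
    assume "x \<in> Fall"
    then obtain v' where "v' \<in> Xc" "x \<in> Fv v'" unfolding Fall_def by blast
    then show "x \<in> Fv v" using UPdisj[OF that(1) \<open>v' \<in> Xc\<close> _ that(2)] FvUP by blast
  qed (use that in \<open>auto simp: Fall_def\<close>)
  have diffUP: "{x \<in> ?UP v. ct x \<noteq> c' x} = Fv v" if "v \<in> Xc" for v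
    using FallUP[OF that] FvUP[OF that] unfolding ct_def flip_def by auto
  have single: "0 \<le> dtrans Eh D' ct F1" if "v \<in> Xc" "F1 \<in> Fam v" for v F1
  proof -
    have "dtrans Eh D' ct F1 = dtrans Eh D' (flip c' (Fv v)) F1"
    proof (rule dtrans_local[OF symEh])
      fix z assume z: "z \<in> F1 \<or> (\<exists>x\<in>F1. Eh x z)"
      have "z \<in> Fall \<longleftrightarrow> z \<in> Fv v"
      proof
        assume "z \<in> Fall"
        then obtain v' where v': "v' \<in> Xc" "z \<in> Fv v'" unfolding Fall_def by blast
        show "z \<in> Fv v"
        proof (cases "v' = v")
          case True then show ?thesis using v' by simp
        next
          case False
          have zU: "z \<in> ?UP v'" using v' FvUP by blast
          have F1U: "F1 \<subseteq> ?UP v" using that unfolding Fam_def by blast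
          from z show ?thesis
          proof
            assume "z \<in> F1" then show ?thesis using UPdisj[OF that(1) v'(1)] False zU F1U by blast
          next
            assume "\<exists>x\<in>F1. Eh x z"
            then obtain x where "x \<in> F1" "Eh x z" by blast
            then show ?thesis using noedge[OF that(1) v'(1)] False zU F1U by blast
          qed
        qed
      qed (use that in \<open>auto simp: Fall_def\<close>)
      then show "ct z = flip c' (Fv v) z" unfolding ct_def flip_def by simp
    qed
    also have "\<dots> = dtrans Eh D' c' ((Fv v - F1) \<union> (F1 - Fv v)) - dtrans Eh D' c' (Fv v)"
      using dtrans_comp[OF symEh NEfin[OF Fv(1)[OF that(1)] that(1)] NEfin[OF that(2,1)], of D' c'] by simp
    also have "\<dots> = g (Fv v) - g ((Fv v - F1) \<union> (F1 - Fv v))" unfolding g_def by simp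
    also have "\<dots> \<ge> 0"
    proof -
      have "(Fv v - F1) \<union> (F1 - Fv v) \<in> Fam v" using Fv(1)[OF that(1)] that(2) unfolding Fam_def by auto
      then show ?thesis using Fv(2)[OF that(1)] by fastforce
    qed
    finally show ?thesis .
  qed
  have smax: "\<forall>F. finite F \<longrightarrow> F \<subseteq> ?U \<longrightarrow> (\<forall>v\<in>F. fin_deg ?EG v) \<longrightarrow> 0 \<le> dtrans Eh D' ct F"
  proof (intro allI)
    fix F :: "'a set"
    show "finite F \<longrightarrow> F \<subseteq> ?U \<longrightarrow> (\<forall>v\<in>F. fin_deg ?EG v) \<longrightarrow> 0 \<le> dtrans Eh D' ct F"
    proof (induction "card F" arbitrary: F rule: less_induct)
      case less
      show ?case
      proof (intro impI)
        assume F: "finite F" "F \<subseteq> ?U" "\<forall>v\<in>F. fin_deg ?EG v"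
        show "0 \<le> dtrans Eh D' ct F"
        proof (cases "F = {}")
          case True then show ?thesis by (simp add: dtrans_empty)
        next
          case False
          then obtain x where "x \<in> F" by blast
          then obtain v where v: "v \<in> Xc" "x \<in> ?UP v" using inU F by blast
          define F1 where "F1 = F \<inter> ?UP v"
          define F2 where "F2 = F - ?UP v"
          have F1fam: "F1 \<in> Fam v" using F unfolding F1_def Fam_def by auto
          show ?thesis
          proof (cases "F2 = {}")
            case True
            then have "F = F1" unfolding F1_def F2_def by blast
            then show ?thesis using single[OF v(1) F1fam] by simp
          next
            case False
            have F2sub: "F2 \<subseteq> ?U" "finite F2" "\<forall>y\<in>F2. fin_deg ?EG y" using F unfolding F2_def by auto
            have fNE2: "finite (NE Eh F2)"
              using F2sub finEh unfolding upset_def up_def by (intro NE_finite) blast+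
            have "card F2 < card F" using F \<open>x \<in> F\<close> v unfolding F2_def
              by (intro psubset_card_mono) auto
            then have IH2: "0 \<le> dtrans Eh D' ct F2" using less F2sub by blast
            have "dtrans Eh D' ct F = dtrans Eh D' ct F1 + dtrans Eh D' (flip ct F1) F2"
            proof -
              have "(F1 - F2) \<union> (F2 - F1) = F" unfolding F1_def F2_def by blast
              then show ?thesis using dtrans_comp[OF symEh NEfin[OF F1fam v(1)] fNE2, of D' ct] by simp
            qed
            also have "dtrans Eh D' (flip ct F1) F2 = dtrans Eh D' ct F2"
            proof (rule dtrans_local[OF symEh])
              fix z assume z: "z \<in> F2 \<or> (\<exists>y\<in>F2. Eh y z)"
              have "z \<notin> F1"
              proof
                assume zF1: "z \<in> F1"
                from z show False
                proof
                  assume "z \<in> F2" then show False using zF1 unfolding F1_def F2_def by blast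
                next
                  assume "\<exists>y\<in>F2. Eh y z"
                  then obtain y where y: "y \<in> F2" "Eh y z" by blast
                  then obtain v' where v': "v' \<in> Xc" "y \<in> ?UP v'" using inU F2sub by blast
                  have "v' \<noteq> v" using y v' unfolding F2_def by blast
                  then show False using noedge[OF v'(1) v(1) _ v'(2)] zF1 y unfolding F1_def by blast
                qed
              qed
              then show "flip ct F1 z = ct z" unfolding flip_def by simp
            qed
            finally show ?thesis using single[OF v(1) F1fam] IH2 by simp
          qed
        qed
      qed
    qed
  qed
  show ?thesis
  proof (intro exI[of _ ct] conjI ballI impI)
    show "strongly_maximal Eh ?EG D' ct ?U" unfolding strongly_maximal_def using smax by blast
    show "{x \<in> D'. ct x \<noteq> c' x} \<subseteq> ?U"
    proof
      fix x assume "x \<in> {x \<in> D'. ct x \<noteq> c' x}"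
      then have "x \<in> Fall" unfolding ct_def flip_def by (auto split: if_splits)
      then obtain v where "v \<in> Xc" "x \<in> Fv v" unfolding Fall_def by blast
      then show "x \<in> ?U" using FvUP UPsub by blast
    qed
  next
    fix v assume v: "v \<in> Xc"
    show "finite {x \<in> ?UP v. ct x \<noteq> c' x}" using diffUP[OF v] Fv(1)[OF v] unfolding Fam_def by simp
  next
    fix v x assume v: "v \<in> Xc" and "x \<in> {x \<in> ?UP v. ct x \<noteq> c' x}"
    then show "fin_deg ?EG x" using diffUP[OF v] Fv(1)[OF v] unfolding Fam_def by auto
  next
    fix v x assume v: "v \<in> Xc" and no: "\<not> (\<exists>w\<in>D' - D. \<exists>u\<in>?UP v. Eh w u)" and x: "x \<in> ?UP v"
    have "Mv v = {}" using no unfolding Mv_def by blast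
    then have "Fv v = {}" unfolding Fv_def by simp
    then have "x \<notin> Fall" using FallUP[OF v x] by simp
    then show "ct x = c x" using ext UPsub[OF v] x unfolding ct_def flip_def by auto
  qed
qed

end
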